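(* Let $X\subset\mathbb R^n\setminus\{0\}$ be a finite set such that $0$ lies in the interior of $\operatorname{conv}X$, no element of $X$ is a positive multiple of another element of $X$, and every $n+1$ points of $X$ are in good position. Then there are $k\ge 1$ pairwise disjoint subsets $X_1,\dots,X_k\subseteq X$ such that (i) each $X_i$ is the vertex set of a simplex whose relative interior contains $0$, and (ii) the linear spaces $\operatorname{span}X_1,\dots,\operatorname{span}X_k$ are linearly independent and their direct sum is $\mathbb R^n$.
   Context: The positive hull $\operatorname{pos}A$ is the set of nonnegative linear combinations of elements of $A$. A finite set $A\subset\mathbb R^n$ is in conical position if there is a hyperplane strictly separating $A$ from $0$ (equivalently $0\notin\operatorname{conv}A$) and no point of $A$ lies in the positive hull of the other points of $A$; it is in good position if it is not in conical position. A collection $X_1,\dots,X_k$ as in the conclusion is called a skeleton of $X$. *)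

theory Defs
  imports "HOL-Analysis.Analysis"
begin

definition pos_hull :: "'a::real_vector set \<Rightarrow> 'a set" where
  "pos_hull A = {y. \<exists>S u. finite S \<and> S \<subseteq> A \<and> (\<forall>x\<in>S. 0 \<le> u x) \<and> y = (\<Sum>x\<in>S. u x *\<^sub>R x)}"

definition conical_position :: "'a::euclidean_space set \<Rightarrow> bool" where
  "conical_position A \<longleftrightarrow>
     (\<exists>a b. a \<bullet> 0 < b \<and> (\<forall>x\<in>A. b < a \<bullet> x)) \<and>
     (\<forall>x\<in>A. x \<notin> pos_hull (A - {x}))"

definition good_position :: "'a::euclidean_space set \<Rightarrow> bool" where
  "good_position A \<longleftrightarrow> \<not> conical_position A"

end

theory Submission
  imports Defs
begin
lemma pos_hull_subset_span: "pos_hull A \<subseteq> span A"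
  unfolding pos_hull_def
  by clarify (rule span_sum, rule span_scale, rule span_base, blast)

lemma conical_subset:
  assumes "conical_position A" "B \<subseteq> A"
  shows "conical_position B"
proof -
  have m: "pos_hull (B - {x}) \<subseteq> pos_hull (A - {x})" for x
    using assms(2) unfolding pos_hull_def by blast
  show ?thesis using assms m unfolding conical_position_def by blast
qed

lemma conical_extend:
  fixes A :: "'a::euclidean_space set"
  assumes con: "conical_position A" and x: "x \<notin> span A"
  shows "conical_position (insert x A)"
proof -
  obtain y q where y: "y \<in> span A" and q: "\<And>w. w \<in> span A \<Longrightarrow> orthogonal q w" and xyq: "x = y + q"
    using orthogonal_subspace_decomp_exists[of A x] by metis
  have qA: "q \<bullet> w = 0" if "w \<in> span A" for w using q[OF that] by (simp add: orthogonal_def)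
  have "q \<noteq> 0" using x y xyq by auto
  have qx: "q \<bullet> x = q \<bullet> q" using qA[OF y] xyq by (simp add: inner_add_right)
  have qq: "q \<bullet> q > 0" using \<open>q \<noteq> 0\<close> by simp
  obtain a b where ab: "a \<bullet> 0 < b" "\<forall>z\<in>A. b < a \<bullet> z"
    using con unfolding conical_position_def by blast
  define M where "M = (\<bar>b\<bar> + \<bar>a \<bullet> x\<bar> + 1) / (q \<bullet> q)"
  define a' where "a' = a + M *\<^sub>R q"
  have "M * (q \<bullet> q) = \<bar>b\<bar> + \<bar>a \<bullet> x\<bar> + 1" using qq unfolding M_def by simp
  then have 1: "b < a' \<bullet> x" unfolding a'_def using qx by (simp add: inner_add_left)
  have 2: "b < a' \<bullet> z" if "z \<in> A" for z
    using ab(2) that qA[of z] span_base[of z A] unfolding a'_def by (simp add: inner_add_left)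
  have sep: "\<exists>a b. a \<bullet> 0 < b \<and> (\<forall>z\<in>insert x A. b < a \<bullet> z)"
    using 1 2 ab(1) by (intro exI[of _ a'] exI[of _ b]) auto
  have xA: "x \<notin> A" using x span_base by blast
  have nx: "x \<notin> pos_hull (insert x A - {x})"
  proof
    assume "x \<in> pos_hull (insert x A - {x})"
    then have "x \<in> span A" using pos_hull_subset_span[of A] xA by auto
    then show False using x by simp
  qed
  have nA: "z \<notin> pos_hull (insert x A - {z})" if zA: "z \<in> A" for z
  proof
    assume "z \<in> pos_hull (insert x A - {z})"
    then obtain S u where S: "finite S" "S \<subseteq> insert x A - {z}" "\<forall>s\<in>S. 0 \<le> u s"
       and zs: "z = (\<Sum>s\<in>S. u s *\<^sub>R s)" unfolding pos_hull_def by blast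
    show False
    proof (cases "x \<in> S")
      case False
      then have "z \<in> pos_hull (A - {z})" using S zs unfolding pos_hull_def by blast
      then show False using con zA unfolding conical_position_def by blast
    next
      case True
      have "0 = q \<bullet> z" using qA[of z] span_base[OF zA] by simp
      also have "\<dots> = (\<Sum>s\<in>S. u s * (q \<bullet> s))" unfolding zs by (simp add: inner_sum_right)
      also have "\<dots> = u x * (q \<bullet> x) + (\<Sum>s\<in>S - {x}. u s * (q \<bullet> s))"
        using True S(1) by (simp add: sum.remove)
      also have "(\<Sum>s\<in>S - {x}. u s * (q \<bullet> s)) = 0"
        using S(2) qA span_base by (intro sum.neutral) (auto)
      finally have "u x * (q \<bullet> q) = 0" using qx by simp
      then have ux: "u x = 0" using qq by simp
      have "z = (\<Sum>s\<in>S - {x}. u s *\<^sub>R s)"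
        using zs True S(1) ux by (simp add: sum.remove)
      then have "z \<in> pos_hull (A - {z})" using S unfolding pos_hull_def
        by (intro CollectI exI[of _ "S - {x}"] exI[of _ u]) auto
      then show False using con zA unfolding conical_position_def by blast
    qed
  qed
  show ?thesis unfolding conical_position_def using sep nx nA by blast
qed




lemma conical_extend_full:
  fixes X :: "'a::euclidean_space set"
  assumes spX: "span X = UNIV"
  shows "conical_position A \<Longrightarrow> A \<subseteq> X \<Longrightarrow> finite A \<Longrightarrow>
    \<exists>A'. A \<subseteq> A' \<and> A' \<subseteq> X \<and> conical_position A' \<and> finite A' \<and> card A' + dim A = card A + DIM('a)"
proof (induction "DIM('a) - dim A" arbitrary: A)
  case 0
  then have "dim A = DIM('a)" using dim_subset_UNIV[of A] by simp
  then show ?case using 0 by auto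
next
  case (Suc n)
  then have "dim A \<noteq> DIM('a)" by simp
  then have "span A \<noteq> UNIV" using dim_eq_full[of A] by simp
  then obtain x where x: "x \<in> X" "x \<notin> span A"
    using spX by (metis span_minimal subsetI subspace_span top.extremum_uniqueI)
  have xA: "x \<notin> A" using x span_base by blast
  have d: "dim (insert x A) = dim A + 1" using x by (simp add: dim_insert)
  have "n = DIM('a) - dim (insert x A)" using Suc.hyps(2) d by simp
  then obtain A' where A': "insert x A \<subseteq> A'" "A' \<subseteq> X" "conical_position A'" "finite A'"
     "card A' + dim (insert x A) = card (insert x A) + DIM('a)"
    using Suc.hyps(1)[of "insert x A"] conical_extend[OF Suc.prems(1) x(2)] Suc.prems x by auto
  then show ?case using d xA Suc.prems by (intro exI[of _ A']) auto
qed

lemma lemC: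
  fixes X :: "'a::euclidean_space set"
  assumes spX: "span X = UNIV"
    and gp: "\<forall>A. A \<subseteq> X \<and> card A = DIM('a) + 1 \<longrightarrow> good_position A"
    and AX: "A \<subseteq> X" and finA: "finite A" and dep: "dependent A" and n0: "0 \<notin> convex hull A"
  shows "\<exists>x\<in>A. x \<in> pos_hull (A - {x})"
proof (rule ccontr)
  assume nn: "\<not> (\<exists>x\<in>A. x \<in> pos_hull (A - {x}))"
  have "closed (convex hull A)" using finA by (simp add: compact_imp_closed finite_imp_compact compact_convex_hull)
  then obtain a b where ab: "0 < b" "\<forall>x\<in>convex hull A. inner a x > b"
    using separating_hyperplane_closed_0[of "convex hull A"] n0 convex_convex_hull by blast
  have "conical_position A" unfolding conical_position_def
    using ab hull_subset[of A convex] nn by (intro conjI exI[of _ a] exI[of _ b]) auto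
  then obtain A' where A': "A \<subseteq> A'" "A' \<subseteq> X" "conical_position A'" "finite A'"
      "card A' + dim A = card A + DIM('a)"
    using conical_extend_full[OF spX] AX finA by blast
  have "dim A \<le> card A" using dim_le_card[of A A] finA span_superset by blast
  moreover have "dim A \<noteq> card A" using card_eq_dim[of A A] finA dep span_superset by (metis order_refl)
  ultimately have "DIM('a) + 1 \<le> card A'" using A'(5) by linarith
  then obtain B where B: "B \<subseteq> A'" "card B = DIM('a) + 1"
    using obtain_subset_with_card_n by metis
  have "conical_position B" using conical_subset A'(3) B(1) by blast
  moreover have "good_position B" using gp B A'(2) by blast
  ultimately show False unfolding good_position_def by blast
qed




definition fam :: "'a::real_vector set \<Rightarrow> 'a set set \<Rightarrow> ('a \<Rightarrow> real) \<Rightarrow> bool" where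
  "fam X F \<rho> \<longleftrightarrow> finite F \<and> (\<forall>C\<in>F. C \<subseteq> X \<and> C \<noteq> {}) \<and>
     (\<forall>C\<in>F. \<forall>D\<in>F. C \<noteq> D \<longrightarrow> C \<inter> D = {}) \<and> (\<forall>x\<in>\<Union>F. 0 < \<rho> x) \<and>
     (\<forall>C\<in>F. (\<Sum>x\<in>C. \<rho> x *\<^sub>R x) = 0) \<and>
     (\<forall>\<alpha>. (\<Sum>x\<in>\<Union>F. \<alpha> x *\<^sub>R x) = 0 \<longrightarrow> (\<forall>C\<in>F. \<exists>c. \<forall>x\<in>C. \<alpha> x = c * \<rho> x))"

locale sk =
  fixes X :: "'a::euclidean_space set"
  assumes finX: "finite X"
    and LC: "\<And>A. A \<subseteq> X \<Longrightarrow> dependent A \<Longrightarrow> 0 \<notin> convex hull A \<Longrightarrow> \<exists>x\<in>A. x \<in> pos_hull (A - {x})"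
begin

lemma famD:
  assumes "fam X F \<rho>"
  shows famF: "finite F" and famS: "\<And>C. C \<in> F \<Longrightarrow> C \<subseteq> X" and famN: "\<And>C. C \<in> F \<Longrightarrow> C \<noteq> {}"
    and famDis: "\<And>C D. C \<in> F \<Longrightarrow> D \<in> F \<Longrightarrow> C \<noteq> D \<Longrightarrow> C \<inter> D = {}"
    and famP: "\<And>x. x \<in> \<Union>F \<Longrightarrow> 0 < \<rho> x"
    and famR: "\<And>C. C \<in> F \<Longrightarrow> (\<Sum>x\<in>C. \<rho> x *\<^sub>R x) = 0"
    and famU: "\<And>\<alpha> C. (\<Sum>x\<in>\<Union>F. \<alpha> x *\<^sub>R x) = 0 \<Longrightarrow> C \<in> F \<Longrightarrow> \<exists>c. \<forall>x\<in>C. \<alpha> x = c * \<rho> x"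
proof -
  note A = assms[unfolded fam_def]
  show "finite F" using A by (rule conjunct1)
  note A = A[THEN conjunct2]
  show "\<And>C. C \<in> F \<Longrightarrow> C \<subseteq> X" using A[THEN conjunct1] by blast
  show "\<And>C. C \<in> F \<Longrightarrow> C \<noteq> {}" using A[THEN conjunct1] by blast
  note A = A[THEN conjunct2]
  show "\<And>C D. C \<in> F \<Longrightarrow> D \<in> F \<Longrightarrow> C \<noteq> D \<Longrightarrow> C \<inter> D = {}" using A[THEN conjunct1] by blast
  note A = A[THEN conjunct2]
  show "\<And>x. x \<in> \<Union>F \<Longrightarrow> 0 < \<rho> x" using A[THEN conjunct1] by blast
  note A = A[THEN conjunct2]
  show "\<And>C. C \<in> F \<Longrightarrow> (\<Sum>x\<in>C. \<rho> x *\<^sub>R x) = 0" using A[THEN conjunct1] by blast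
  note A = A[THEN conjunct2]
  show "\<And>\<alpha> C. (\<Sum>x\<in>\<Union>F. \<alpha> x *\<^sub>R x) = 0 \<Longrightarrow> C \<in> F \<Longrightarrow> \<exists>c. \<forall>x\<in>C. \<alpha> x = c * \<rho> x"
    using A by blast
qed

lemma fam_finU: "fam X F \<rho> \<Longrightarrow> finite (\<Union>F)"
proof -
  assume a: "fam X F \<rho>"
  then have "\<Union>F \<subseteq> X" using famS[OF a] by blast
  then show ?thesis using finX by (rule finite_subset)
qed

lemma fam_finC: "fam X F \<rho> \<Longrightarrow> C \<in> F \<Longrightarrow> finite C"
  using famS finX finite_subset by metis

lemma fam_sum:
  assumes "fam X F \<rho>"
  shows "(\<Sum>x\<in>\<Union>F. g x) = (\<Sum>C\<in>F. \<Sum>x\<in>C. g x)"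
proof -
  have "\<forall>A\<in>F. finite A" using fam_finC[OF assms] by blast
  moreover have "\<forall>A\<in>F. \<forall>B\<in>F. A \<noteq> B \<longrightarrow> A \<inter> B = {}" using famDis[OF assms] by blast
  ultimately show ?thesis using sum.Union_disjoint[of F g] by (simp add: o_def)
qed

lemma fam_norm:
  assumes fa: "fam X F \<rho>" and w: "w \<in> span (\<Union>F)"
  shows "\<exists>\<beta>. (\<Sum>x\<in>\<Union>F. \<beta> x *\<^sub>R x) = w \<and> (\<forall>x\<in>\<Union>F. 0 \<le> \<beta> x) \<and> (\<forall>C\<in>F. \<exists>z\<in>C. \<beta> z = 0)"
proof -
  let ?U = "\<Union>F"
  have finU: "finite ?U" using fam_finU[OF fa] .
  obtain \<beta>0 where b0: "(\<Sum>x\<in>?U. \<beta>0 x *\<^sub>R x) = w" using w span_finite[OF finU] by auto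
  define m where "m C = Min ((\<lambda>y. \<beta>0 y / \<rho> y) ` C)" for C
  define g where "g C x = (if x \<in> C then m C * \<rho> x else 0)" for C x
  define \<beta> where "\<beta> x = \<beta>0 x - (\<Sum>C\<in>F. g C x)" for x
  have fF: "finite F" and dis: "\<forall>C\<in>F. \<forall>D\<in>F. C \<noteq> D \<longrightarrow> C \<inter> D = {}" and rpos: "\<forall>x\<in>?U. 0 < \<rho> x"
    and ne: "\<forall>C\<in>F. C \<noteq> {}" and rs: "\<forall>C\<in>F. (\<Sum>x\<in>C. \<rho> x *\<^sub>R x) = 0"
    using famF[OF fa] famDis[OF fa] famP[OF fa] famN[OF fa] famR[OF fa] by auto
  have gC: "(\<Sum>D\<in>F. g D x) = m C * \<rho> x" if "C \<in> F" "x \<in> C" for C x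
  proof -
    have "(\<Sum>D\<in>F. g D x) = g C x + (\<Sum>D\<in>F - {C}. g D x)" by (rule sum.remove[OF fF that(1)])
    also have "(\<Sum>D\<in>F - {C}. g D x) = 0"
    proof (rule sum.neutral, rule ballI)
      fix D assume D: "D \<in> F - {C}"
      then have "x \<notin> D" using dis that by blast
      then show "g D x = 0" unfolding g_def by simp
    qed
    finally show ?thesis using that unfolding g_def by simp
  qed
  have "(\<Sum>x\<in>?U. \<beta> x *\<^sub>R x) = (\<Sum>x\<in>?U. \<beta>0 x *\<^sub>R x - (\<Sum>C\<in>F. g C x *\<^sub>R x))"
    unfolding \<beta>_def by (intro sum.cong refl) (simp add: scaleR_left_diff_distrib scaleR_sum_left)
  also have "\<dots> = w - (\<Sum>x\<in>?U. \<Sum>C\<in>F. g C x *\<^sub>R x)" by (simp only: sum_subtractf b0)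
  also have "(\<Sum>x\<in>?U. \<Sum>C\<in>F. g C x *\<^sub>R x) = (\<Sum>C\<in>F. \<Sum>x\<in>?U. g C x *\<^sub>R x)" by (rule sum.swap)
  also have "\<dots> = (\<Sum>C\<in>F. m C *\<^sub>R (\<Sum>x\<in>C. \<rho> x *\<^sub>R x))"
  proof (rule sum.cong[OF refl])
    fix C assume C: "C \<in> F"
    have "(\<Sum>x\<in>?U. g C x *\<^sub>R x) = (\<Sum>x\<in>?U. if x \<in> C then (m C * \<rho> x) *\<^sub>R x else 0)"
      by (intro sum.cong refl) (simp add: g_def)
    also have "\<dots> = (\<Sum>x\<in>?U \<inter> C. (m C * \<rho> x) *\<^sub>R x)"
      by (rule sum.inter_restrict[OF finU, symmetric])
    also have "?U \<inter> C = C" using C by blast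
    finally show "(\<Sum>x\<in>?U. g C x *\<^sub>R x) = m C *\<^sub>R (\<Sum>x\<in>C. \<rho> x *\<^sub>R x)"
      by (simp add: scaleR_sum_right)
  qed
  also have "\<dots> = 0" using rs by simp
  finally have 1: "(\<Sum>x\<in>?U. \<beta> x *\<^sub>R x) = w" by simp
  have 2: "0 \<le> \<beta> x" if xU: "x \<in> ?U" for x
  proof -
    obtain C where C: "C \<in> F" "x \<in> C" using xU by blast
    have "m C \<le> \<beta>0 x / \<rho> x" unfolding m_def using C fam_finC[OF fa C(1)] by (intro Min_le) auto
    moreover have "\<rho> x > 0" using rpos xU by blast
    ultimately have "m C * \<rho> x \<le> \<beta>0 x" by (simp add: pos_le_divide_eq)
    then show ?thesis unfolding \<beta>_def using gC[OF C] by simp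
  qed
  have 3: "\<exists>z\<in>C. \<beta> z = 0" if C: "C \<in> F" for C
  proof -
    have "m C \<in> (\<lambda>y. \<beta>0 y / \<rho> y) ` C" unfolding m_def
      using C fam_finC[OF fa C] ne by (intro Min_in) auto
    then obtain z where z: "z \<in> C" "m C = \<beta>0 z / \<rho> z" by blast
    have "\<rho> z > 0" using rpos z C by blast
    then have "\<beta> z = 0" unfolding \<beta>_def using gC[OF C z(1)] z(2) by simp
    then show ?thesis using z by blast
  qed
  show ?thesis using 1 2 3 by blast
qed

lemma fam_end:
  assumes fa: "fam X F \<rho>" and T: "finite T" "T \<subseteq> X" "T \<inter> \<Union>F = {}" "T \<noteq> {}"
    and lp: "\<forall>t\<in>T. 0 < l t" and l0: "(\<Sum>t\<in>T. l t *\<^sub>R t) = 0"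
    and T3: "\<forall>\<alpha>. (\<Sum>t\<in>T. \<alpha> t *\<^sub>R t) \<in> span (\<Union>F) \<longrightarrow> (\<exists>c. \<forall>t\<in>T. \<alpha> t = c * l t)"
  shows "fam X (insert T F) (\<lambda>x. if x \<in> T then l x else \<rho> x)"
proof -
  let ?U = "\<Union>F"
  let ?r = "\<lambda>x. if x \<in> T then l x else \<rho> x"
  have finU: "finite ?U" using fam_finU[OF fa] .
  have TF: "T \<notin> F" using T by blast
  have rel: "\<forall>C\<in>insert T F. \<exists>c. \<forall>x\<in>C. \<alpha> x = c * ?r x"
    if a: "(\<Sum>x\<in>\<Union>(insert T F). \<alpha> x *\<^sub>R x) = 0" for \<alpha>
  proof -
    have s: "(\<Sum>x\<in>T. \<alpha> x *\<^sub>R x) + (\<Sum>x\<in>?U. \<alpha> x *\<^sub>R x) = 0"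
      using a sum.union_disjoint[OF T(1) finU T(3), of "\<lambda>x. \<alpha> x *\<^sub>R x"] by simp
    have "(\<Sum>x\<in>?U. \<alpha> x *\<^sub>R x) \<in> span ?U" by (rule span_sum) (auto intro: span_scale span_base)
    then have "- (\<Sum>x\<in>?U. \<alpha> x *\<^sub>R x) \<in> span ?U" by (rule span_neg)
    moreover have "(\<Sum>x\<in>T. \<alpha> x *\<^sub>R x) = - (\<Sum>x\<in>?U. \<alpha> x *\<^sub>R x)" using s by (simp add: eq_neg_iff_add_eq_0)
    ultimately have "(\<Sum>x\<in>T. \<alpha> x *\<^sub>R x) \<in> span ?U" by simp
    then obtain c where c: "\<forall>t\<in>T. \<alpha> t = c * l t" using T3 by blast
    have "(\<Sum>x\<in>T. \<alpha> x *\<^sub>R x) = c *\<^sub>R (\<Sum>t\<in>T. l t *\<^sub>R t)"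
      using c by (simp add: scaleR_sum_right)
    then have "(\<Sum>x\<in>?U. \<alpha> x *\<^sub>R x) = 0" using s l0 by simp
    then have "\<forall>C\<in>F. \<exists>c. \<forall>x\<in>C. \<alpha> x = c * \<rho> x" using famU[OF fa] by blast
    moreover have "\<forall>C\<in>F. \<forall>x\<in>C. ?r x = \<rho> x" using T(3) by auto
    ultimately show ?thesis using c by auto
  qed
  have rs: "(\<Sum>x\<in>C. ?r x *\<^sub>R x) = 0" if "C \<in> insert T F" for C
  proof (cases "C = T")
    case True then show ?thesis using l0 by simp
  next
    case False
    then have C: "C \<in> F" using that by simp
    then have "(\<Sum>x\<in>C. ?r x *\<^sub>R x) = (\<Sum>x\<in>C. \<rho> x *\<^sub>R x)"
      using T(3) by (intro sum.cong) auto
    then show ?thesis using famR[OF fa C] by simp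
  qed
  have pos: "\<forall>x\<in>\<Union>(insert T F). 0 < ?r x" using famP[OF fa] lp by auto
  have dis: "\<forall>C\<in>insert T F. \<forall>D\<in>insert T F. C \<noteq> D \<longrightarrow> C \<inter> D = {}"
    using famDis[OF fa] T(3) by blast
  have sub: "\<forall>C\<in>insert T F. C \<subseteq> X \<and> C \<noteq> {}" using famS[OF fa] famN[OF fa] T by blast
  have fi: "finite (insert T F)" using famF[OF fa] by simp
  have rs': "\<forall>C\<in>insert T F. (\<Sum>x\<in>C. ?r x *\<^sub>R x) = 0" using rs by blast
  have rel': "\<forall>\<alpha>. (\<Sum>x\<in>\<Union>(insert T F). \<alpha> x *\<^sub>R x) = 0 \<longrightarrow> (\<forall>C\<in>insert T F. \<exists>c. \<forall>x\<in>C. \<alpha> x = c * ?r x)"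
    using rel by blast
  show ?thesis unfolding fam_def by (intro conjI fi rs' pos dis sub rel')
qed

end



context sk begin

lemma fam_key:
  assumes fa: "fam X F \<rho>" and T: "finite T" "T \<subseteq> X" "T \<inter> \<Union>F = {}" "2 \<le> card T"
    and lp: "\<forall>t\<in>T. 0 < l t"
    and T3: "\<forall>\<alpha>. (\<Sum>t\<in>T. \<alpha> t *\<^sub>R t) \<in> span (\<Union>F) \<longrightarrow> (\<exists>c. \<forall>t\<in>T. \<alpha> t = c * l t)"
    and bs: "(\<Sum>x\<in>\<Union>F. \<beta> x *\<^sub>R x) = - (\<Sum>t\<in>T. l t *\<^sub>R t)"
    and bp: "\<forall>x\<in>\<Union>F. 0 \<le> \<beta> x" and bz: "\<forall>C\<in>F. \<exists>z\<in>C. \<beta> z = 0"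
    and C0: "C0 \<in> F" and x1: "x1 \<in> C0" "\<beta> x1 \<noteq> 0"
  shows "\<exists>z0\<in>C0. \<exists>r>0. \<beta> z0 = 0 \<and> (\<forall>x\<in>C0 - {z0}. \<beta> x = r * \<rho> x)"
proof -
  let ?U = "\<Union>F"
  have finU: "finite ?U" using fam_finU[OF fa] .
  have finC0: "finite C0" using fam_finC[OF fa C0] .
  have rpos: "\<And>x. x \<in> ?U \<Longrightarrow> 0 < \<rho> x" using famP[OF fa] by blast
  have C0U: "C0 \<subseteq> ?U" using C0 by blast
  define q where "q x = \<beta> x / \<rho> x" for x
  define r where "r = Max (q ` C0)"
  have "r \<in> q ` C0" unfolding r_def using finC0 x1 by (intro Max_in) auto
  then obtain s1 where s1: "s1 \<in> C0" "q s1 = r" by blast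
  have qle: "q x \<le> r" if "x \<in> C0" for x unfolding r_def using finC0 that by (intro Max_ge) auto
  have ble: "\<beta> x \<le> r * \<rho> x" if "x \<in> C0" for x
  proof -
    have "\<rho> x > 0" using rpos C0U that by blast
    then show ?thesis using qle[OF that] unfolding q_def by (simp add: pos_divide_le_eq)
  qed
  have "\<beta> x1 > 0" using bp x1 C0U by force
  moreover have "\<rho> x1 > 0" using rpos C0U x1 by blast
  ultimately have "q x1 > 0" unfolding q_def by simp
  then have r0: "r > 0" using qle[OF x1(1)] by simp
  obtain z0 where z0: "z0 \<in> C0" "\<beta> z0 = 0" using bz C0 by blast
  have bs1: "\<beta> s1 = r * \<rho> s1"
  proof -
    have "\<rho> s1 > 0" using rpos C0U s1 by blast
    then show ?thesis using s1(2) unfolding q_def by (simp add: field_simps)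
  qed
  define R where "R x = (if x \<in> T then l x else if x \<in> C0 then \<beta> x - r * \<rho> x else \<beta> x)" for x
  have notT: "x \<notin> T" if "x \<in> ?U" for x using T(3) that by blast
  have Rs1: "R s1 = 0" using bs1 notT[of s1] s1 C0U unfolding R_def by auto
  have Rz0: "R z0 < 0"
  proof -
    have "\<rho> z0 > 0" using rpos C0U z0 by blast
    then show ?thesis using z0 notT[of z0] C0U r0 unfolding R_def by auto
  qed
  have sumT: "(\<Sum>x\<in>T. R x *\<^sub>R x) = (\<Sum>t\<in>T. l t *\<^sub>R t)"
    unfolding R_def by (intro sum.cong) auto
  have sumU: "(\<Sum>x\<in>?U. R x *\<^sub>R x) = - (\<Sum>t\<in>T. l t *\<^sub>R t)"
  proof -
    have "(\<Sum>x\<in>?U. R x *\<^sub>R x) = (\<Sum>x\<in>?U. \<beta> x *\<^sub>R x - (if x \<in> C0 then (r * \<rho> x) *\<^sub>R x else 0))"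
      by (intro sum.cong refl) (auto simp: R_def notT scaleR_left_diff_distrib)
    also have "\<dots> = (\<Sum>x\<in>?U. \<beta> x *\<^sub>R x) - (\<Sum>x\<in>?U. (if x \<in> C0 then (r * \<rho> x) *\<^sub>R x else 0))"
      by (rule sum_subtractf)
    also have "(\<Sum>x\<in>?U. (if x \<in> C0 then (r * \<rho> x) *\<^sub>R x else 0)) = (\<Sum>x\<in>?U \<inter> C0. (r * \<rho> x) *\<^sub>R x)"
      by (rule sum.inter_restrict[OF finU, symmetric])
    also have "?U \<inter> C0 = C0" using C0U by blast
    also have "(\<Sum>x\<in>C0. (r * \<rho> x) *\<^sub>R x) = r *\<^sub>R (\<Sum>x\<in>C0. \<rho> x *\<^sub>R x)"
      by (simp add: scaleR_sum_right)
    also have "\<dots> = 0" using famR[OF fa C0] by simp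
    finally show ?thesis using bs by simp
  qed
  define B where "B = T \<union> {x\<in>?U. R x \<noteq> 0}"
  have "finite {x\<in>?U. R x \<noteq> 0}" using finU by (rule rev_finite_subset) blast
  then have finB: "finite B" unfolding B_def using T(1) by blast
  have BX: "B \<subseteq> X" unfolding B_def using T(2) famS[OF fa] by blast
  have TB: "T \<subseteq> B" unfolding B_def by blast
  have z0B: "z0 \<in> B" unfolding B_def using Rz0 z0 C0U by auto
  have BTU: "B - T = {x\<in>?U. R x \<noteq> 0}" unfolding B_def using T(3) by blast
  have sumBT: "(\<Sum>x\<in>B - T. R x *\<^sub>R x) = (\<Sum>x\<in>?U. R x *\<^sub>R x)"
    unfolding BTU by (rule sum.mono_neutral_left[OF finU]) auto
  have splitB: "(\<Sum>x\<in>B. f x) = (\<Sum>x\<in>T. f x) + (\<Sum>x\<in>B - T. f x)" for f :: "'a \<Rightarrow> 'a"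
    using sum.subset_diff[OF TB finB, of f] by simp
  have relB: "(\<Sum>x\<in>B. R x *\<^sub>R x) = 0" using splitB sumBT sumT sumU by simp
  have UQ: "\<exists>c. \<forall>x\<in>B. \<alpha> x = c * R x" if a: "(\<Sum>x\<in>B. \<alpha> x *\<^sub>R x) = 0" for \<alpha>
  proof -
    have e: "(\<Sum>x\<in>T. \<alpha> x *\<^sub>R x) = - (\<Sum>x\<in>B - T. \<alpha> x *\<^sub>R x)"
      using a splitB[of "\<lambda>x. \<alpha> x *\<^sub>R x"] by (simp add: eq_neg_iff_add_eq_0)
    have "(\<Sum>x\<in>B - T. \<alpha> x *\<^sub>R x) \<in> span ?U"
      by (rule span_sum) (use BTU in \<open>auto intro: span_scale span_base\<close>)
    then have "(\<Sum>x\<in>T. \<alpha> x *\<^sub>R x) \<in> span ?U" unfolding e by (rule span_neg)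
    then obtain c where c: "\<forall>t\<in>T. \<alpha> t = c * l t" using T3 by blast
    define \<delta> where "\<delta> x = (if x \<in> B then \<alpha> x else 0) - c * R x" for x
    have "(\<Sum>x\<in>?U. (if x \<in> B then \<alpha> x else 0) *\<^sub>R x) = (\<Sum>x\<in>?U. if x \<in> B then \<alpha> x *\<^sub>R x else 0)"
      by (intro sum.cong) auto
    also have "\<dots> = (\<Sum>x\<in>?U \<inter> B. \<alpha> x *\<^sub>R x)" by (rule sum.inter_restrict[OF finU, symmetric])
    also have "?U \<inter> B = B - T" unfolding B_def using T(3) by blast
    finally have s1': "(\<Sum>x\<in>?U. (if x \<in> B then \<alpha> x else 0) *\<^sub>R x) = - (\<Sum>x\<in>T. \<alpha> x *\<^sub>R x)"
      using e by simp
    have "(\<Sum>x\<in>T. \<alpha> x *\<^sub>R x) = c *\<^sub>R (\<Sum>t\<in>T. l t *\<^sub>R t)" using c by (simp add: scaleR_sum_right)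
    moreover have "(\<Sum>x\<in>?U. (c * R x) *\<^sub>R x) = c *\<^sub>R (\<Sum>x\<in>?U. R x *\<^sub>R x)"
      by (simp add: scaleR_sum_right)
    ultimately have sd: "(\<Sum>x\<in>?U. \<delta> x *\<^sub>R x) = 0"
      unfolding \<delta>_def using s1' sumU
      by (simp add: scaleR_left_diff_distrib sum_subtractf)
    have dz: "\<delta> x = 0" if xU: "x \<in> ?U" for x
    proof -
      obtain C where C: "C \<in> F" "x \<in> C" using xU by blast
      obtain d where d: "\<forall>y\<in>C. \<delta> y = d * \<rho> y" using famU[OF fa sd C(1)] by blast
      have "\<exists>p\<in>C. R p = 0"
      proof (cases "C = C0")
        case True then show ?thesis using s1 Rs1 by blast
      next
        case False
        obtain z where z: "z \<in> C" "\<beta> z = 0" using bz C by blast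
        have "z \<notin> C0" using famDis[OF fa C(1) C0 False] z by blast
        moreover have "z \<notin> T" using notT z C by blast
        ultimately have "R z = 0" unfolding R_def using z by simp
        then show ?thesis using z by blast
      qed
      then obtain p where p: "p \<in> C" "R p = 0" by blast
      have "p \<notin> B" unfolding B_def using p notT[of p] C by blast
      then have "\<delta> p = 0" unfolding \<delta>_def using p by simp
      moreover have "\<rho> p > 0" using rpos p C by blast
      ultimately have "d = 0" using d p by simp
      then show ?thesis using d C by simp
    qed
    have "\<forall>x\<in>B. \<alpha> x = c * R x"
    proof
      fix x assume xB: "x \<in> B"
      show "\<alpha> x = c * R x"
      proof (cases "x \<in> T")
        case True then show ?thesis using c unfolding R_def by simp
      next
        case False
        then have "x \<in> ?U" using xB unfolding B_def by blast
        then show ?thesis using dz[of x] xB unfolding \<delta>_def by simp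
      qed
    qed
    then show ?thesis by blast
  qed
  obtain t0 where t0: "t0 \<in> T" using T(4) by (metis card.empty equals0I not_numeral_le_zero)
  have depB: "dependent B"
    unfolding dependent_finite[OF finB] using relB t0 TB lp unfolding R_def
    by (intro exI[of _ R] conjI bexI[of _ t0]) (auto simp: R_def)
  have n0: "0 \<notin> convex hull B"
  proof
    assume "0 \<in> convex hull B"
    then obtain u where u: "\<forall>x\<in>B. 0 \<le> u x" "sum u B = 1" "(\<Sum>x\<in>B. u x *\<^sub>R x) = 0"
      unfolding convex_hull_finite[OF finB] by auto
    obtain c where c: "\<forall>x\<in>B. u x = c * R x" using UQ[OF u(3)] by blast
    show False
    proof (cases c "0::real" rule: linorder_cases)
      case less
      have "u t0 = c * l t0" using c t0 TB unfolding R_def by auto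
      moreover have "l t0 > 0" using lp t0 by blast
      ultimately have "u t0 < 0" using less by (simp add: mult_neg_pos)
      then show False using u t0 TB by force
    next
      case equal
      then have "sum u B = 0" using c by simp
      then show False using u by simp
    next
      case greater
      then have "u z0 < 0" using c z0B Rz0 by (simp add: mult_pos_neg)
      then show False using u z0B by force
    qed
  qed
  obtain b where b: "b \<in> B" "b \<in> pos_hull (B - {b})" using LC[OF BX depB n0] by blast
  then obtain S u where S: "finite S" "S \<subseteq> B - {b}" "\<forall>y\<in>S. 0 \<le> u y" "b = (\<Sum>y\<in>S. u y *\<^sub>R y)"
    unfolding pos_hull_def by blast
  define \<gamma> where "\<gamma> y = (if y = b then -1 else if y \<in> S then u y else 0)" for y
  have "(\<Sum>y\<in>B. \<gamma> y *\<^sub>R y) = \<gamma> b *\<^sub>R b + (\<Sum>y\<in>B - {b}. \<gamma> y *\<^sub>R y)"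
    by (rule sum.remove[OF finB b(1)])
  also have "(\<Sum>y\<in>B - {b}. \<gamma> y *\<^sub>R y) = (\<Sum>y\<in>B - {b}. if y \<in> S then u y *\<^sub>R y else 0)"
    unfolding \<gamma>_def by (intro sum.cong) auto
  also have "\<dots> = (\<Sum>y\<in>(B - {b}) \<inter> S. u y *\<^sub>R y)" using finB by (intro sum.inter_restrict[symmetric]) auto
  also have "(B - {b}) \<inter> S = S" using S(2) by blast
  finally have "(\<Sum>y\<in>B. \<gamma> y *\<^sub>R y) = 0" using S(4) unfolding \<gamma>_def by simp
  then obtain c where c: "\<forall>x\<in>B. \<gamma> x = c * R x" using UQ by blast
  have "\<exists>t\<in>T. t \<noteq> b"
  proof (rule ccontr)
    assume "\<not> (\<exists>t\<in>T. t \<noteq> b)"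
    then have "T \<subseteq> {b}" by blast
    then have "card T \<le> 1" using card_mono[of "{b}" T] by simp
    then show False using T(4) by simp
  qed
  then obtain t where t: "t \<in> T" "t \<noteq> b" by blast
  have "\<gamma> t \<ge> 0" unfolding \<gamma>_def using t S(3) by auto
  then have "c * l t \<ge> 0" using c t TB unfolding R_def by auto
  moreover have "l t > 0" using lp t by blast
  ultimately have "c \<ge> 0" by (simp add: zero_le_mult_iff)
  moreover have "c \<noteq> 0" using c b(1) unfolding \<gamma>_def by force
  ultimately have cpos: "c > 0" by simp
  have Rnn: "R x \<ge> 0" if "x \<in> B" "x \<noteq> b" for x
  proof -
    have "\<gamma> x \<ge> 0" unfolding \<gamma>_def using that S(3) by auto
    then have "c * R x \<ge> 0" using c that by auto
    then show ?thesis using cpos by (simp add: zero_le_mult_iff)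
  qed
  have bz0: "b = z0" using Rnn[OF z0B] Rz0 by force
  have "\<forall>x\<in>C0 - {z0}. \<beta> x = r * \<rho> x"
  proof
    fix x assume x: "x \<in> C0 - {z0}"
    have xT: "x \<notin> T" using notT x C0U by blast
    have Rx: "R x = \<beta> x - r * \<rho> x" unfolding R_def using xT x by simp
    have "R x = 0"
    proof (rule ccontr)
      assume "R x \<noteq> 0"
      then have "x \<in> B" unfolding B_def using x C0U by blast
      then have "R x \<ge> 0" using Rnn x bz0 by blast
      moreover have "R x \<le> 0" using Rx ble x by simp
      ultimately show False using \<open>R x \<noteq> 0\<close> by simp
    qed
    then show "\<beta> x = r * \<rho> x" using Rx by simp
  qed
  then show ?thesis using z0 r0 by blast
qed

end



context sk begin

lemma fam_remove:
  assumes fa: "fam X F \<rho>" and C0: "C0 \<in> F"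
  shows "fam X (F - {C0}) \<rho>" and "\<Union>(F - {C0}) = \<Union>F - C0"
proof -
  show U0: "\<Union>(F - {C0}) = \<Union>F - C0" using famDis[OF fa] C0 by blast
  have finU: "finite (\<Union>F)" using fam_finU[OF fa] .
  have rel: "\<forall>C\<in>F - {C0}. \<exists>c. \<forall>x\<in>C. \<alpha> x = c * \<rho> x"
    if a: "(\<Sum>x\<in>\<Union>(F - {C0}). \<alpha> x *\<^sub>R x) = 0" for \<alpha>
  proof -
    have "(\<Sum>x\<in>\<Union>F. (if x \<in> \<Union>(F - {C0}) then \<alpha> x else 0) *\<^sub>R x)
        = (\<Sum>x\<in>\<Union>F. if x \<in> \<Union>(F - {C0}) then \<alpha> x *\<^sub>R x else 0)" by (intro sum.cong) auto
    also have "\<dots> = (\<Sum>x\<in>\<Union>F \<inter> \<Union>(F - {C0}). \<alpha> x *\<^sub>R x)" by (rule sum.inter_restrict[OF finU, symmetric])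
    also have "\<Union>F \<inter> \<Union>(F - {C0}) = \<Union>(F - {C0})" by blast
    finally have "(\<Sum>x\<in>\<Union>F. (if x \<in> \<Union>(F - {C0}) then \<alpha> x else 0) *\<^sub>R x) = 0" using a by simp
    note h = famU[OF fa this]
    show ?thesis
    proof
      fix C assume C: "C \<in> F - {C0}"
      obtain c where "\<forall>x\<in>C. (if x \<in> \<Union>(F - {C0}) then \<alpha> x else 0) = c * \<rho> x" using h C by blast
      moreover have "\<forall>x\<in>C. x \<in> \<Union>(F - {C0})" using C by blast
      ultimately have "\<forall>x\<in>C. \<alpha> x = c * \<rho> x" by simp
      then show "\<exists>c. \<forall>x\<in>C. \<alpha> x = c * \<rho> x" by blast
    qed
  qed
  have fi: "finite (F - {C0})" using famF[OF fa] by simp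
  have s: "\<forall>C\<in>F - {C0}. C \<subseteq> X \<and> C \<noteq> {}" using famS[OF fa] famN[OF fa] by blast
  have d: "\<forall>C\<in>F - {C0}. \<forall>D\<in>F - {C0}. C \<noteq> D \<longrightarrow> C \<inter> D = {}" using famDis[OF fa] by blast
  have p: "\<forall>x\<in>\<Union>(F - {C0}). 0 < \<rho> x" using famP[OF fa] by blast
  have r: "\<forall>C\<in>F - {C0}. (\<Sum>x\<in>C. \<rho> x *\<^sub>R x) = 0" using famR[OF fa] by blast
  have rel': "\<forall>\<alpha>. (\<Sum>x\<in>\<Union>(F - {C0}). \<alpha> x *\<^sub>R x) = 0 \<longrightarrow> (\<forall>C\<in>F - {C0}. \<exists>c. \<forall>x\<in>C. \<alpha> x = c * \<rho> x)"
    using rel by blast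
  show "fam X (F - {C0}) \<rho>" unfolding fam_def by (intro conjI fi s d p r rel')
qed

lemma neg_eq_helper:
  fixes a b c :: "'b::ab_group_add"
  assumes "- c = a + b" shows "a + c = - b"
proof -
  have "b = - c - a" using assms by (simp add: algebra_simps)
  then show ?thesis by simp
qed

lemma in_span_sum: "(\<Sum>x\<in>A. f x *\<^sub>R x) \<in> span B" if "A \<subseteq> B" for A B :: "'a set" and f
  by (rule span_sum) (use that in \<open>auto intro: span_scale span_base\<close>)

lemma fam_step:
  "fam X F \<rho> \<Longrightarrow> finite T \<Longrightarrow> T \<subseteq> X \<Longrightarrow> T \<inter> \<Union>F = {} \<Longrightarrow> 2 \<le> card T \<Longrightarrow> \<forall>t\<in>T. 0 < l t \<Longrightarrow>
   (\<Sum>t\<in>T. l t *\<^sub>R t) \<in> span (\<Union>F) \<Longrightarrow>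
   (\<forall>\<alpha>. (\<Sum>t\<in>T. \<alpha> t *\<^sub>R t) \<in> span (\<Union>F) \<longrightarrow> (\<exists>c. \<forall>t\<in>T. \<alpha> t = c * l t)) \<Longrightarrow>
   \<exists>F' \<rho>'. fam X F' \<rho>' \<and> span (\<Union>F') = span (\<Union>F \<union> T)"
proof (induction "card F" arbitrary: F \<rho> T l rule: less_induct)
  case less
  note fa = less.prems(1) and T = less.prems(2-5) and lp = less.prems(6) and lsp = less.prems(7)
    and T3 = less.prems(8)
  let ?U = "\<Union>F"
  let ?L = "\<Sum>t\<in>T. l t *\<^sub>R t"
  have finU: "finite ?U" using fam_finU[OF fa] .
  show ?case
  proof (cases "?L = 0")
    case True
    have "T \<noteq> {}" using T(4) by auto
    from fam_end[OF fa T(1-3) this lp True T3]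
    show ?thesis by (intro exI conjI) (auto simp: Un_commute)
  next
    case False
    have "- ?L \<in> span ?U" using lsp by (rule span_neg)
    then obtain \<beta> where bs: "(\<Sum>x\<in>?U. \<beta> x *\<^sub>R x) = - ?L" and bp: "\<forall>x\<in>?U. 0 \<le> \<beta> x"
        and bz: "\<forall>C\<in>F. \<exists>z\<in>C. \<beta> z = 0"
      using fam_norm[OF fa] by blast
    have "\<exists>x1\<in>?U. \<beta> x1 \<noteq> 0"
    proof (rule ccontr)
      assume "\<not> ?thesis"
      then have "(\<Sum>x\<in>?U. \<beta> x *\<^sub>R x) = 0" by (intro sum.neutral) auto
      then show False using bs False by simp
    qed
    then obtain x1 C0 where x1: "C0 \<in> F" "x1 \<in> C0" "\<beta> x1 \<noteq> 0" by blast
    obtain z0 r where z0: "z0 \<in> C0" "r > 0" "\<beta> z0 = 0" and br: "\<forall>x\<in>C0 - {z0}. \<beta> x = r * \<rho> x"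
      using fam_key[OF fa T lp T3 bs bp bz x1] by blast
    define F0 where "F0 = F - {C0}"
    define T0 where "T0 = T \<union> (C0 - {z0})"
    define l0 where "l0 x = (if x \<in> T then l x else \<beta> x)" for x
    have fa0: "fam X F0 \<rho>" and U0: "\<Union>F0 = ?U - C0" unfolding F0_def using fam_remove[OF fa x1(1)] by auto
    have finC0: "finite C0" using fam_finC[OF fa x1(1)] .
    have C0U: "C0 \<subseteq> ?U" using x1 by blast
    have TC0: "T \<inter> C0 = {}" using T(3) C0U by blast
    have card0: "card F0 < card F" unfolding F0_def by (rule card_Diff1_less[OF famF[OF fa] x1(1)])
    have finT0: "finite T0" unfolding T0_def using T(1) finC0 by simp
    have T0X: "T0 \<subseteq> X" unfolding T0_def using T(2) famS[OF fa x1(1)] by blast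
    have T0U0: "T0 \<inter> \<Union>F0 = {}" unfolding T0_def U0 using T(3) by blast
    have cT0: "2 \<le> card T0" using T(4) card_mono[OF finT0, of T] unfolding T0_def by simp
    have lp0: "\<forall>t\<in>T0. 0 < l0 t"
    proof
      fix t assume t: "t \<in> T0"
      show "0 < l0 t"
      proof (cases "t \<in> T")
        case True then show ?thesis using lp unfolding l0_def by simp
      next
        case False
        then have "t \<in> C0 - {z0}" using t unfolding T0_def by blast
        moreover have "\<rho> t > 0" using famP[OF fa] calculation C0U by blast
        ultimately show ?thesis using br False z0(2) unfolding l0_def by simp
      qed
    qed
    have sumT0: "(\<Sum>x\<in>T0. f x) = (\<Sum>x\<in>T. f x) + (\<Sum>x\<in>C0 - {z0}. f x)" for f :: "'a \<Rightarrow> 'a"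
      unfolding T0_def by (rule sum.union_disjoint) (use T(1) finC0 TC0 in auto)
    have sumC0: "(\<Sum>x\<in>C0. f x) = f z0 + (\<Sum>x\<in>C0 - {z0}. f x)" for f :: "'a \<Rightarrow> 'a"
      by (rule sum.remove[OF finC0 z0(1)])
    have sumU: "(\<Sum>x\<in>?U. f x) = (\<Sum>x\<in>C0. f x) + (\<Sum>x\<in>\<Union>F0. f x)" for f :: "'a \<Rightarrow> 'a"
    proof -
      have "?U = C0 \<union> \<Union>F0" unfolding U0 using C0U by blast
      then show ?thesis using sum.union_disjoint[OF finC0, of "\<Union>F0" f] finU U0 by (simp add: Diff_eq Int_commute)
    qed
    have l0T: "(\<Sum>x\<in>T. l0 x *\<^sub>R x) = ?L" unfolding l0_def by (intro sum.cong) auto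
    have l0C: "(\<Sum>x\<in>C0 - {z0}. l0 x *\<^sub>R x) = (\<Sum>x\<in>C0 - {z0}. \<beta> x *\<^sub>R x)"
      unfolding l0_def using TC0 by (intro sum.cong) auto
    have bC0: "(\<Sum>x\<in>C0 - {z0}. \<beta> x *\<^sub>R x) = (\<Sum>x\<in>C0. \<beta> x *\<^sub>R x)" using sumC0[of "\<lambda>x. \<beta> x *\<^sub>R x"] z0(3) by simp
    have L0: "(\<Sum>x\<in>T0. l0 x *\<^sub>R x) = - (\<Sum>x\<in>\<Union>F0. \<beta> x *\<^sub>R x)"
    proof -
      have "(\<Sum>x\<in>T0. l0 x *\<^sub>R x) = (\<Sum>x\<in>C0. \<beta> x *\<^sub>R x) + ?L"
        using sumT0[of "\<lambda>x. l0 x *\<^sub>R x"] l0T l0C bC0 by (simp add: add.commute)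
      moreover have "- ?L = (\<Sum>x\<in>C0. \<beta> x *\<^sub>R x) + (\<Sum>x\<in>\<Union>F0. \<beta> x *\<^sub>R x)"
        using sumU[of "\<lambda>x. \<beta> x *\<^sub>R x"] bs by simp
      ultimately show ?thesis using neg_eq_helper by metis
    qed
    have lsp0: "(\<Sum>x\<in>T0. l0 x *\<^sub>R x) \<in> span (\<Union>F0)"
      unfolding L0 by (rule span_neg, rule in_span_sum) simp
    have T30: "\<forall>\<alpha>. (\<Sum>t\<in>T0. \<alpha> t *\<^sub>R t) \<in> span (\<Union>F0) \<longrightarrow> (\<exists>c. \<forall>t\<in>T0. \<alpha> t = c * l0 t)"
    proof (intro allI impI)
      fix \<alpha> assume a: "(\<Sum>t\<in>T0. \<alpha> t *\<^sub>R t) \<in> span (\<Union>F0)"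
      have spU0: "span (\<Union>F0) \<subseteq> span ?U" unfolding U0 by (rule span_mono) blast
      have "(\<Sum>t\<in>T. \<alpha> t *\<^sub>R t) = (\<Sum>t\<in>T0. \<alpha> t *\<^sub>R t) - (\<Sum>x\<in>C0 - {z0}. \<alpha> x *\<^sub>R x)"
        using sumT0[of "\<lambda>x. \<alpha> x *\<^sub>R x"] by simp
      also have "\<dots> \<in> span ?U"
        by (rule span_diff) (use a spU0 in_span_sum[of "C0 - {z0}" ?U \<alpha>] C0U in auto)
      finally obtain c where c: "\<forall>t\<in>T. \<alpha> t = c * l t" using T3 by blast
      have aT: "(\<Sum>t\<in>T. \<alpha> t *\<^sub>R t) = c *\<^sub>R ?L" using c by (simp add: scaleR_sum_right)
      have "(\<Sum>x\<in>C0 - {z0}. (\<alpha> x - c * \<beta> x) *\<^sub>R x) = (\<Sum>t\<in>T0. \<alpha> t *\<^sub>R t) + c *\<^sub>R (\<Sum>x\<in>\<Union>F0. \<beta> x *\<^sub>R x)"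
      proof -
        have "(\<Sum>x\<in>C0 - {z0}. (\<alpha> x - c * \<beta> x) *\<^sub>R x) = (\<Sum>x\<in>C0 - {z0}. \<alpha> x *\<^sub>R x) - c *\<^sub>R (\<Sum>x\<in>C0 - {z0}. \<beta> x *\<^sub>R x)"
          by (simp add: scaleR_left_diff_distrib sum_subtractf scaleR_sum_right)
        moreover have "(\<Sum>x\<in>C0 - {z0}. \<alpha> x *\<^sub>R x) = (\<Sum>t\<in>T0. \<alpha> t *\<^sub>R t) - c *\<^sub>R ?L"
          using sumT0[of "\<lambda>x. \<alpha> x *\<^sub>R x"] aT by simp
        moreover have "(\<Sum>x\<in>C0 - {z0}. \<beta> x *\<^sub>R x) = - ?L - (\<Sum>x\<in>\<Union>F0. \<beta> x *\<^sub>R x)"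
          using bC0 sumU[of "\<lambda>x. \<beta> x *\<^sub>R x"] bs by (simp add: algebra_simps)
        ultimately show ?thesis by (simp add: algebra_simps)
      qed
      also have "\<dots> \<in> span (\<Union>F0)"
        by (rule span_add[OF a], rule span_scale, rule in_span_sum) simp
      finally have "(\<Sum>x\<in>C0 - {z0}. (\<alpha> x - c * \<beta> x) *\<^sub>R x) \<in> span (\<Union>F0)" .
      moreover have finU0: "finite (\<Union>F0)" using fam_finU[OF fa0] .
      ultimately obtain \<gamma> where g: "(\<Sum>x\<in>C0 - {z0}. (\<alpha> x - c * \<beta> x) *\<^sub>R x) = (\<Sum>x\<in>\<Union>F0. \<gamma> x *\<^sub>R x)"
        using span_finite[OF finU0] by auto
      define \<delta> where "\<delta> x = (if x \<in> C0 - {z0} then \<alpha> x - c * \<beta> x else if x \<in> \<Union>F0 then - \<gamma> x else 0)" for x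
      have dis0: "(C0 - {z0}) \<inter> \<Union>F0 = {}" unfolding U0 by blast
      have "(\<Sum>x\<in>?U. \<delta> x *\<^sub>R x) = (\<Sum>x\<in>?U. (if x \<in> C0 - {z0} then (\<alpha> x - c * \<beta> x) *\<^sub>R x else 0)
                 + (if x \<in> \<Union>F0 then (- \<gamma> x) *\<^sub>R x else 0))"
        unfolding \<delta>_def using dis0 by (intro sum.cong) auto
      also have "\<dots> = (\<Sum>x\<in>?U. (if x \<in> C0 - {z0} then (\<alpha> x - c * \<beta> x) *\<^sub>R x else 0))
                 + (\<Sum>x\<in>?U. (if x \<in> \<Union>F0 then (- \<gamma> x) *\<^sub>R x else 0))"
        by (rule sum.distrib)
      also have "(\<Sum>x\<in>?U. (if x \<in> C0 - {z0} then (\<alpha> x - c * \<beta> x) *\<^sub>R x else 0))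
           = (\<Sum>x\<in>?U \<inter> (C0 - {z0}). (\<alpha> x - c * \<beta> x) *\<^sub>R x)" by (rule sum.inter_restrict[OF finU, symmetric])
      also have "?U \<inter> (C0 - {z0}) = C0 - {z0}" using C0U by blast
      also have "(\<Sum>x\<in>?U. (if x \<in> \<Union>F0 then (- \<gamma> x) *\<^sub>R x else 0))
           = (\<Sum>x\<in>?U \<inter> \<Union>F0. (- \<gamma> x) *\<^sub>R x)" by (rule sum.inter_restrict[OF finU, symmetric])
      also have "?U \<inter> \<Union>F0 = \<Union>F0" unfolding U0 by blast
      finally have sd: "(\<Sum>x\<in>?U. \<delta> x *\<^sub>R x) = 0" using g by (simp add: sum_negf)
      obtain d where d: "\<forall>x\<in>C0. \<delta> x = d * \<rho> x" using famU[OF fa sd x1(1)] by blast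
      have "\<delta> z0 = 0" unfolding \<delta>_def U0 using z0(1) by simp
      moreover have "\<rho> z0 > 0" using famP[OF fa] z0(1) C0U by blast
      ultimately have "d = 0" using d z0(1) by simp
      then have dC: "\<forall>x\<in>C0 - {z0}. \<alpha> x = c * \<beta> x"
      proof -
        assume d0: "d = 0"
        show ?thesis
        proof
          fix x assume x: "x \<in> C0 - {z0}"
          then have "\<delta> x = 0" using d d0 by simp
          then show "\<alpha> x = c * \<beta> x" using x unfolding \<delta>_def by simp
        qed
      qed
      have "\<forall>t\<in>T0. \<alpha> t = c * l0 t"
        using c dC TC0 unfolding T0_def l0_def by auto
      then show "\<exists>c. \<forall>t\<in>T0. \<alpha> t = c * l0 t" by blast
    qed
    obtain F' \<rho>' where F': "fam X F' \<rho>'" "span (\<Union>F') = span (\<Union>F0 \<union> T0)"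
      using less.hyps[OF card0 fa0 finT0 T0X T0U0 cT0 lp0 lsp0 T30] by blast
    have eq: "\<Union>F0 \<union> T0 = (?U \<union> T) - {z0}" unfolding U0 T0_def using z0(1) T(3) C0U by blast
    have "\<rho> z0 *\<^sub>R z0 + (\<Sum>x\<in>C0 - {z0}. \<rho> x *\<^sub>R x) = 0" using sumC0[of "\<lambda>x. \<rho> x *\<^sub>R x"] famR[OF fa x1(1)] by simp
    then have Sz: "(\<Sum>x\<in>C0 - {z0}. \<rho> x *\<^sub>R x) = - (\<rho> z0 *\<^sub>R z0)"
      by (simp add: eq_neg_iff_add_eq_0 add.commute)
    have "\<rho> z0 > 0" using famP[OF fa] z0(1) C0U by blast
    then have "z0 = (- 1 / \<rho> z0) *\<^sub>R (\<Sum>x\<in>C0 - {z0}. \<rho> x *\<^sub>R x)"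
      unfolding Sz by simp
    also have "\<dots> \<in> span ((?U \<union> T) - {z0})"
      by (rule span_scale, rule in_span_sum) (use C0U in blast)
    finally have "span ((?U \<union> T) - {z0}) = span (?U \<union> T)"
    proof -
      assume h: "z0 \<in> span ((?U \<union> T) - {z0})"
      have "insert z0 ((?U \<union> T) - {z0}) = ?U \<union> T" using z0(1) C0U by blast
      then show ?thesis using span_redundant[OF h] by simp
    qed
    then show ?thesis using F' eq by auto
  qed
qed

end



context sk begin

lemma fam_T:
  assumes fa: "fam X F \<rho>" and posX: "\<forall>v. \<exists>u. (\<forall>y\<in>X. 0 \<le> u y) \<and> (\<Sum>y\<in>X. u y *\<^sub>R y) = v"
    and ns: "span (\<Union>F) \<noteq> UNIV"
  shows "\<exists>T l. finite T \<and> T \<subseteq> X \<and> T \<inter> span (\<Union>F) = {} \<and> 2 \<le> card T \<and> (\<forall>t\<in>T. 0 < l t) \<and>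
     (\<Sum>t\<in>T. l t *\<^sub>R t) \<in> span (\<Union>F) \<and>
     (\<forall>\<alpha>. (\<Sum>t\<in>T. \<alpha> t *\<^sub>R t) \<in> span (\<Union>F) \<longrightarrow> (\<exists>c. \<forall>t\<in>T. \<alpha> t = c * l t))"
proof -
  define S where "S = span (\<Union>F)"
  define P where "P T \<longleftrightarrow> T \<subseteq> X - S \<and> T \<noteq> {} \<and> (\<exists>l. (\<forall>t\<in>T. 0 < l t) \<and> (\<Sum>t\<in>T. l t *\<^sub>R t) \<in> S)" for T
  have subS: "subspace S" unfolding S_def by simp
  have "span X = UNIV"
  proof -
    have "v \<in> span X" for v
    proof -
      obtain u where "(\<Sum>y\<in>X. u y *\<^sub>R y) = v" using posX by blast
      then show ?thesis using in_span_sum[of X X u] by simp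
    qed
    then show ?thesis by blast
  qed
  then obtain x where x: "x \<in> X" "x \<notin> S"
    using ns unfolding S_def by (metis span_minimal subsetI subspace_span top.extremum_uniqueI)
  obtain u where u: "\<forall>y\<in>X. 0 \<le> u y" "(\<Sum>y\<in>X. u y *\<^sub>R y) = - x" using posX by blast
  define l1 where "l1 y = u y + (if y = x then 1 else 0)" for y
  have l1s: "(\<Sum>y\<in>X. l1 y *\<^sub>R y) = 0"
  proof -
    have "(\<Sum>y\<in>X. l1 y *\<^sub>R y) = (\<Sum>y\<in>X. u y *\<^sub>R y) + (\<Sum>y\<in>X. (if y = x then y else 0))"
    proof -
      have "(\<Sum>y\<in>X. l1 y *\<^sub>R y) = (\<Sum>y\<in>X. u y *\<^sub>R y + (if y = x then y else 0))"
        unfolding l1_def by (intro sum.cong refl) (simp add: scaleR_left_distrib)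
      then show ?thesis by (simp add: sum.distrib)
    qed
    also have "(\<Sum>y\<in>X. (if y = x then y else 0)) = x" using x(1) finX by (simp add: sum.delta)
    finally show ?thesis using u(2) by simp
  qed
  have l1p: "\<forall>y\<in>X. 0 \<le> l1 y" using u(1) unfolding l1_def by simp
  define T1 where "T1 = {y\<in>X - S. l1 y > 0}"
  have xT1: "x \<in> T1" unfolding T1_def using x u(1) unfolding l1_def by (simp add: add_nonneg_pos)
  have T1X: "T1 \<subseteq> X" unfolding T1_def by blast
  have "(\<Sum>y\<in>X - T1. l1 y *\<^sub>R y) \<in> S"
  proof (rule subspace_sum[OF subS])
    fix y assume y: "y \<in> X - T1"
    show "l1 y *\<^sub>R y \<in> S"
    proof (cases "y \<in> S")
      case True then show ?thesis using subspace_scale[OF subS] by blast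
    next
      case False
      then have "l1 y = 0" using y l1p unfolding T1_def by force
      then show ?thesis using subspace_0[OF subS] by simp
    qed
  qed
  moreover have "(\<Sum>y\<in>X. l1 y *\<^sub>R y) = (\<Sum>y\<in>T1. l1 y *\<^sub>R y) + (\<Sum>y\<in>X - T1. l1 y *\<^sub>R y)"
    using sum.subset_diff[OF T1X finX] by (simp add: add.commute)
  ultimately have "(\<Sum>y\<in>T1. l1 y *\<^sub>R y) \<in> S" using l1s subspace_neg[OF subS]
    by (metis add.commute eq_neg_iff_add_eq_0)
  then have PT1: "P T1" unfolding P_def using xT1 unfolding T1_def by blast
  define n where "n = (LEAST n. \<exists>T. P T \<and> card T = n)"
  have "\<exists>T. P T \<and> card T = n" unfolding n_def by (rule LeastI_ex) (use PT1 in blast)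
  then obtain T where PT: "P T" and cT: "card T = n" by blast
  have minT: "card T \<le> card T'" if "P T'" for T'
    unfolding cT n_def by (rule Least_le) (use that in blast)
  obtain l where lp: "\<forall>t\<in>T. 0 < l t" and ls: "(\<Sum>t\<in>T. l t *\<^sub>R t) \<in> S" using PT unfolding P_def by blast
  have TXS: "T \<subseteq> X - S" and Tne: "T \<noteq> {}" using PT unfolding P_def by auto
  have finT: "finite T" using TXS finX finite_subset by blast
  have c2: "2 \<le> card T"
  proof (rule ccontr)
    assume "\<not> 2 \<le> card T"
    moreover have "card T \<noteq> 0" using finT Tne by simp
    ultimately have "card T = 1" by simp
    then obtain t where t: "T = {t}" using card_1_singletonE by blast
    then have "l t *\<^sub>R t \<in> S" using ls by simp
    then have "(1 / l t) *\<^sub>R (l t *\<^sub>R t) \<in> S" using subspace_scale[OF subS] by blast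
    moreover have "l t > 0" using lp t by simp
    ultimately have "t \<in> S" by simp
    then show False using TXS t by blast
  qed
  have T3: "\<exists>c. \<forall>t\<in>T. \<alpha> t = c * l t" if a: "(\<Sum>t\<in>T. \<alpha> t *\<^sub>R t) \<in> S" for \<alpha>
  proof (rule ccontr)
    assume nc: "\<not> ?thesis"
    obtain t0 where t0: "t0 \<in> T" using Tne by blast
    define c0 where "c0 = \<alpha> t0 / l t0"
    define g where "g t = \<alpha> t - c0 * l t" for t
    have gs: "(\<Sum>t\<in>T. g t *\<^sub>R t) \<in> S"
    proof -
      have "(\<Sum>t\<in>T. g t *\<^sub>R t) = (\<Sum>t\<in>T. \<alpha> t *\<^sub>R t) - c0 *\<^sub>R (\<Sum>t\<in>T. l t *\<^sub>R t)"
        unfolding g_def by (simp add: scaleR_left_diff_distrib sum_subtractf scaleR_sum_right)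
      then show ?thesis using a ls subspace_diff[OF subS] subspace_scale[OF subS] by metis
    qed
    have "l t0 > 0" using lp t0 by blast
    then have gt0: "g t0 = 0" unfolding g_def c0_def by simp
    have "\<exists>t\<in>T. g t \<noteq> 0" using nc unfolding g_def by (metis eq_iff_diff_eq_0)
    then obtain g' where g's: "(\<Sum>t\<in>T. g' t *\<^sub>R t) \<in> S" and g't0: "g' t0 = 0" and g'p: "\<exists>t\<in>T. g' t > 0"
    proof (cases "\<exists>t\<in>T. g t > 0")
      case True then show ?thesis using that[of g] gs gt0 by blast
    next
      case False
      then obtain t where "t \<in> T" "g t < 0" using \<open>\<exists>t\<in>T. g t \<noteq> 0\<close> by (meson linorder_neqE_linordered_idom)
      moreover have "(\<Sum>t\<in>T. (- g t) *\<^sub>R t) \<in> S"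
        using gs subspace_neg[OF subS] by (simp add: sum_negf)
      ultimately show ?thesis using that[of "\<lambda>t. - g t"] gt0 by force
    qed
    define Q where "Q = {t\<in>T. g' t > 0}"
    have finQ: "finite Q" unfolding Q_def using finT by simp
    have Qne: "Q \<noteq> {}" unfolding Q_def using g'p by blast
    define e where "e = Min ((\<lambda>t. l t / g' t) ` Q)"
    have "e \<in> (\<lambda>t. l t / g' t) ` Q" unfolding e_def using finQ Qne by (intro Min_in) auto
    then obtain t1 where t1: "t1 \<in> Q" "e = l t1 / g' t1" by blast
    have ele: "e \<le> l t / g' t" if "t \<in> Q" for t unfolding e_def using finQ that by (intro Min_le) auto
    define l' where "l' t = l t - e * g' t" for t
    have l'nn: "0 \<le> l' t" if t: "t \<in> T" for t
    proof (cases "g' t > 0")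
      case True
      then have "e \<le> l t / g' t" using ele t unfolding Q_def by blast
      then have "e * g' t \<le> l t" using True by (simp add: pos_le_divide_eq)
      then show ?thesis unfolding l'_def by simp
    next
      case False
      have "e > 0" using t1 lp unfolding Q_def by auto
      then have "e * g' t \<le> 0" using False by (simp add: mult_nonneg_nonpos)
      then show ?thesis unfolding l'_def using lp t by (smt (verit))
    qed
    have l't1: "l' t1 = 0" unfolding l'_def using t1 unfolding Q_def by auto
    have l't0: "l' t0 > 0" unfolding l'_def using g't0 lp t0 by simp
    define T' where "T' = {t\<in>T. l' t > 0}"
    have T'sub: "T' \<subseteq> T - {t1}" unfolding T'_def using l't1 by auto
    have t1T: "t1 \<in> T" using t1 unfolding Q_def by blast
    have "card T' < card T"
    proof -
      have "card T' \<le> card (T - {t1})" using T'sub finT by (intro card_mono) auto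
      also have "\<dots> < card T" by (rule card_Diff1_less[OF finT t1T])
      finally show ?thesis .
    qed
    moreover have "P T'"
    proof -
      have "(\<Sum>t\<in>T'. l' t *\<^sub>R t) = (\<Sum>t\<in>T. l' t *\<^sub>R t)"
        using l'nn unfolding T'_def by (intro sum.mono_neutral_left[OF finT]) (auto simp: order_le_less)
      also have "\<dots> = (\<Sum>t\<in>T. l t *\<^sub>R t) - e *\<^sub>R (\<Sum>t\<in>T. g' t *\<^sub>R t)"
        unfolding l'_def by (simp add: scaleR_left_diff_distrib sum_subtractf scaleR_sum_right)
      also have "\<dots> \<in> S" using ls g's subspace_diff[OF subS] subspace_scale[OF subS] by metis
      finally have "(\<Sum>t\<in>T'. l' t *\<^sub>R t) \<in> S" .
      moreover have "T' \<subseteq> X - S" using TXS unfolding T'_def by blast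
      moreover have "T' \<noteq> {}" using l't0 t0 unfolding T'_def by blast
      moreover have "\<forall>t\<in>T'. 0 < l' t" unfolding T'_def by blast
      ultimately show ?thesis unfolding P_def by blast
    qed
    ultimately show False using minT by fastforce
  qed
  show ?thesis
    using finT TXS c2 lp ls T3 unfolding S_def by (intro exI[of _ T] exI[of _ l]) blast
qed

end



context sk begin

lemma fam_empty: "fam X {} \<rho>" unfolding fam_def by simp

lemma fam_full:
  assumes posX: "\<forall>v. \<exists>u. (\<forall>y\<in>X. 0 \<le> u y) \<and> (\<Sum>y\<in>X. u y *\<^sub>R y) = v"
  shows "fam X F \<rho> \<Longrightarrow> \<exists>F' \<rho>'. fam X F' \<rho>' \<and> span (\<Union>F') = UNIV"
proof (induction "DIM('a) - dim (\<Union>F)" arbitrary: F \<rho> rule: less_induct)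
  case less
  note fa = less.prems
  show ?case
  proof (cases "span (\<Union>F) = UNIV")
    case True then show ?thesis using fa by blast
  next
    case False
    obtain T l where T: "finite T" "T \<subseteq> X" "T \<inter> span (\<Union>F) = {}" "2 \<le> card T" "\<forall>t\<in>T. 0 < l t"
      "(\<Sum>t\<in>T. l t *\<^sub>R t) \<in> span (\<Union>F)"
      "\<forall>\<alpha>. (\<Sum>t\<in>T. \<alpha> t *\<^sub>R t) \<in> span (\<Union>F) \<longrightarrow> (\<exists>c. \<forall>t\<in>T. \<alpha> t = c * l t)"
      using fam_T[OF fa posX False] by blast
    have TU: "T \<inter> \<Union>F = {}" using T(3) span_superset[of "\<Union>F"] by blast
    obtain F' \<rho>' where F': "fam X F' \<rho>'" "span (\<Union>F') = span (\<Union>F \<union> T)"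
      using fam_step[OF fa T(1,2) TU T(4,5,6,7)] by blast
    have "T \<noteq> {}" using T(4) by auto
    then obtain t where t: "t \<in> T" by blast
    have "span (\<Union>F) \<subset> span (\<Union>F \<union> T)"
    proof
      show "span (\<Union>F) \<subseteq> span (\<Union>F \<union> T)" by (rule span_mono) blast
      have "t \<in> span (\<Union>F \<union> T)" using t span_base[of t "\<Union>F \<union> T"] by blast
      moreover have "t \<notin> span (\<Union>F)" using t T(3) by blast
      ultimately show "span (\<Union>F) \<noteq> span (\<Union>F \<union> T)" by blast
    qed
    then have "dim (\<Union>F) < dim (\<Union>F \<union> T)" by (rule dim_psubset)
    moreover have "dim (\<Union>F') = dim (\<Union>F \<union> T)" using F'(2) by (metis dim_span)
    moreover have "dim (\<Union>F') \<le> DIM('a)" using dim_subset_UNIV[of "\<Union>F'"] by simp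
    ultimately have "DIM('a) - dim (\<Union>F') < DIM('a) - dim (\<Union>F)" by linarith
    then show ?thesis using less.hyps F'(1) by blast
  qed
qed

lemma fam_circ:
  assumes fa: "fam X F \<rho>" and C: "C \<in> F"
  shows "\<not> affine_dependent C \<and> 0 \<in> rel_interior (convex hull C)"
proof -
  have finC: "finite C" using fam_finC[OF fa C] .
  have rp: "\<forall>x\<in>C. 0 < \<rho> x" using famP[OF fa] C by blast
  have rs: "(\<Sum>x\<in>C. \<rho> x *\<^sub>R x) = 0" using famR[OF fa C] .
  have ne: "C \<noteq> {}" using famN[OF fa C] .
  have finU: "finite (\<Union>F)" using fam_finU[OF fa] .
  have rel: "\<exists>c. \<forall>x\<in>C. a x = c * \<rho> x" if a: "(\<Sum>x\<in>C. a x *\<^sub>R x) = 0" for a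
  proof -
    have "(\<Sum>x\<in>\<Union>F. (if x \<in> C then a x else 0) *\<^sub>R x) = (\<Sum>x\<in>\<Union>F. if x \<in> C then a x *\<^sub>R x else 0)"
      by (intro sum.cong) auto
    also have "\<dots> = (\<Sum>x\<in>\<Union>F \<inter> C. a x *\<^sub>R x)" by (rule sum.inter_restrict[OF finU, symmetric])
    also have "\<Union>F \<inter> C = C" using C by blast
    finally have "(\<Sum>x\<in>\<Union>F. (if x \<in> C then a x else 0) *\<^sub>R x) = 0" using a by simp
    from famU[OF fa this C] show ?thesis by auto
  qed
  have sp: "sum \<rho> C > 0" using finC ne rp by (intro sum_pos) auto
  have nad: "\<not> affine_dependent C"
  proof
    assume "affine_dependent C"
    then obtain U where U: "sum U C = 0" "\<exists>v\<in>C. U v \<noteq> 0" "(\<Sum>v\<in>C. U v *\<^sub>R v) = 0"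
      unfolding affine_dependent_explicit_finite[OF finC] by blast
    obtain c where c: "\<forall>x\<in>C. U x = c * \<rho> x" using rel[OF U(3)] by blast
    have "sum U C = c * sum \<rho> C" using c by (simp add: sum_distrib_left)
    then have "c = 0" using U(1) sp by simp
    then show False using U(2) c by simp
  qed
  moreover have "0 \<in> rel_interior (convex hull C)"
  proof -
    define u where "u x = \<rho> x / sum \<rho> C" for x
    have "\<forall>x\<in>C. 0 < u x" unfolding u_def using rp sp by simp
    moreover have "sum u C = 1" unfolding u_def using sp by (simp add: sum_divide_distrib[symmetric])
    moreover have "(\<Sum>x\<in>C. u x *\<^sub>R x) = 0"
    proof -
      have "(\<Sum>x\<in>C. u x *\<^sub>R x) = (1 / sum \<rho> C) *\<^sub>R (\<Sum>x\<in>C. \<rho> x *\<^sub>R x)"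
        unfolding u_def by (simp add: scaleR_sum_right)
      then show ?thesis using rs by simp
    qed
    ultimately show ?thesis unfolding rel_interior_convex_hull_explicit[OF nad] by blast
  qed
  ultimately show ?thesis by blast
qed

lemma fam_indep:
  assumes fa: "fam X F \<rho>" and w: "\<forall>C\<in>F. w C \<in> span C" and ws: "(\<Sum>C\<in>F. w C) = 0"
  shows "\<forall>C\<in>F. w C = 0"
proof -
  let ?U = "\<Union>F"
  have finU: "finite ?U" using fam_finU[OF fa] .
  have fF: "finite F" using famF[OF fa] .
  have "\<forall>C\<in>F. \<exists>a. w C = (\<Sum>x\<in>C. a x *\<^sub>R x)"
  proof
    fix C assume C: "C \<in> F"
    show "\<exists>a. w C = (\<Sum>x\<in>C. a x *\<^sub>R x)" using w C span_finite[OF fam_finC[OF fa C]] by auto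
  qed
  then obtain a where a: "\<forall>C\<in>F. w C = (\<Sum>x\<in>C. a C x *\<^sub>R x)" by metis
  define \<alpha> where "\<alpha> x = (\<Sum>D\<in>F. if x \<in> D then a D x else 0)" for x
  have aC: "\<alpha> x = a C x" if C: "C \<in> F" "x \<in> C" for C x
  proof -
    have "\<alpha> x = (if x \<in> C then a C x else 0) + (\<Sum>D\<in>F - {C}. if x \<in> D then a D x else 0)"
      unfolding \<alpha>_def by (rule sum.remove[OF fF C(1)])
    also have "(\<Sum>D\<in>F - {C}. if x \<in> D then a D x else 0) = 0"
    proof (rule sum.neutral, rule ballI)
      fix D assume D: "D \<in> F - {C}"
      then have "x \<notin> D" using famDis[OF fa] C by blast
      then show "(if x \<in> D then a D x else 0) = 0" by simp
    qed
    finally show ?thesis using C by simp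
  qed
  have "(\<Sum>x\<in>?U. \<alpha> x *\<^sub>R x) = (\<Sum>C\<in>F. \<Sum>x\<in>C. \<alpha> x *\<^sub>R x)" by (rule fam_sum[OF fa])
  also have "\<dots> = (\<Sum>C\<in>F. w C)"
  proof (rule sum.cong[OF refl])
    fix C assume C: "C \<in> F"
    have "(\<Sum>x\<in>C. \<alpha> x *\<^sub>R x) = (\<Sum>x\<in>C. a C x *\<^sub>R x)" using aC C by (intro sum.cong) auto
    then show "(\<Sum>x\<in>C. \<alpha> x *\<^sub>R x) = w C" using a C by simp
  qed
  finally have s0: "(\<Sum>x\<in>?U. \<alpha> x *\<^sub>R x) = 0" using ws by simp
  show ?thesis
  proof
    fix C assume C: "C \<in> F"
    obtain c where c: "\<forall>x\<in>C. \<alpha> x = c * \<rho> x" using famU[OF fa s0 C] by blast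
    have "w C = (\<Sum>x\<in>C. \<alpha> x *\<^sub>R x)" using a C aC by (auto intro: sum.cong)
    also have "\<dots> = c *\<^sub>R (\<Sum>x\<in>C. \<rho> x *\<^sub>R x)" using c by (simp add: scaleR_sum_right)
    also have "\<dots> = 0" using famR[OF fa C] by simp
    finally show "w C = 0" .
  qed
qed

end



lemma posX_from_interior:
  fixes X :: "'a::euclidean_space set"
  assumes finX: "finite X" and int: "0 \<in> interior (convex hull X)"
  shows "\<forall>v. \<exists>u. (\<forall>y\<in>X. 0 \<le> u y) \<and> (\<Sum>y\<in>X. u y *\<^sub>R y) = v"
proof
  fix v :: 'a
  obtain e where e: "e > 0" "ball 0 e \<subseteq> convex hull X" using int mem_interior by blast
  show "\<exists>u. (\<forall>y\<in>X. 0 \<le> u y) \<and> (\<Sum>y\<in>X. u y *\<^sub>R y) = v"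
  proof (cases "v = 0")
    case True then show ?thesis by (intro exI[of _ "\<lambda>_. 0"]) simp
  next
    case False
    define w where "w = (e / (2 * norm v)) *\<^sub>R v"
    have "norm w = e / 2" unfolding w_def using False e by simp
    then have "w \<in> ball 0 e" using e by simp
    then have "w \<in> convex hull X" using e by blast
    then obtain u where u: "\<forall>y\<in>X. 0 \<le> u y" "(\<Sum>y\<in>X. u y *\<^sub>R y) = w"
      unfolding convex_hull_finite[OF finX] by blast
    define u' where "u' y = (2 * norm v / e) * u y" for y
    have "(\<Sum>y\<in>X. u' y *\<^sub>R y) = (2 * norm v / e) *\<^sub>R w"
      unfolding u'_def u(2)[symmetric] by (simp add: scaleR_sum_right)
    also have "\<dots> = v" unfolding w_def using False e by simp
    finally have "(\<Sum>y\<in>X. u' y *\<^sub>R y) = v" .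
    moreover have "\<forall>y\<in>X. 0 \<le> u' y" unfolding u'_def using u(1) e by simp
    ultimately show ?thesis by blast
  qed
qed

theorem theorem1p3:
  fixes X :: "'a::euclidean_space set"
  assumes "finite X"
    and "0 \<notin> X"
    and "0 \<in> interior (convex hull X)"
    and "\<forall>x\<in>X. \<forall>y\<in>X. \<forall>c::real. c > 0 \<and> y = c *\<^sub>R x \<longrightarrow> y = x"
    and "\<forall>A. A \<subseteq> X \<and> card A = DIM('a) + 1 \<longrightarrow> good_position A"
  shows "\<exists>k::nat. \<exists>Xs :: nat \<Rightarrow> 'a set. k \<ge> 1 \<and>
           (\<forall>i<k. Xs i \<subseteq> X) \<and>
           (\<forall>i<k. \<forall>j<k. i \<noteq> j \<longrightarrow> Xs i \<inter> Xs j = {}) \<and>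
           (\<forall>i<k. \<not> affine_dependent (Xs i) \<and> 0 \<in> rel_interior (convex hull (Xs i))) \<and>
           (\<forall>v :: nat \<Rightarrow> 'a. (\<forall>i<k. v i \<in> span (Xs i)) \<and> (\<Sum>i<k. v i) = 0
                \<longrightarrow> (\<forall>i<k. v i = 0)) \<and>
           span (\<Union>i<k. Xs i) = UNIV"
proof -
  note finX = assms(1) and gp = assms(5)
  have posX: "\<forall>v. \<exists>u. (\<forall>y\<in>X. 0 \<le> u y) \<and> (\<Sum>y\<in>X. u y *\<^sub>R y) = v"
    using posX_from_interior[OF finX assms(3)] .
  have spX: "span X = UNIV"
  proof -
    have "v \<in> span X" for v
    proof -
      obtain u where "(\<Sum>y\<in>X. u y *\<^sub>R y) = v" using posX by blast
      moreover have "(\<Sum>y\<in>X. u y *\<^sub>R y) \<in> span X" by (rule span_sum) (auto intro: span_scale span_base)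
      ultimately show ?thesis by simp
    qed
    then show ?thesis by blast
  qed
  interpret sk X
  proof
    show "finite X" by (rule finX)
    fix A assume "A \<subseteq> X" "dependent A" "0 \<notin> convex hull A"
    then show "\<exists>x\<in>A. x \<in> pos_hull (A - {x})"
      using lemC[OF spX gp] finite_subset[OF _ finX] by blast
  qed
  obtain F \<rho> where fa: "fam X F \<rho>" and spF: "span (\<Union>F) = UNIV"
    using fam_full[OF posX fam_empty] by blast
  define k where "k = card F"
  obtain h where h: "bij_betw h {0..<k} F" unfolding k_def using ex_bij_betw_nat_finite[OF famF[OF fa]] by blast
  have h': "bij_betw h {..<k} F" using h by (simp add: atLeast0LessThan)
  have hF: "h i \<in> F" if "i < k" for i using bij_betwE[OF h'] that by blast
  have inj: "inj_on h {..<k}" using h' bij_betw_imp_inj_on by blast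
  have img: "h ` {..<k} = F" using h' bij_betw_imp_surj_on by blast
  have "F \<noteq> {}"
  proof
    assume "F = {}"
    then have "span (\<Union>F) = {0}" by simp
    moreover obtain b :: 'a where "b \<in> Basis" using nonempty_Basis by blast
    then have "b \<noteq> 0" using nonzero_Basis by blast
    ultimately show False using spF by blast
  qed
  then have k1: "k \<ge> 1" unfolding k_def using famF[OF fa] by (simp add: Suc_leI card_gt_0_iff)
  have sub: "\<forall>i<k. h i \<subseteq> X" using hF famS[OF fa] by blast
  have dis: "\<forall>i<k. \<forall>j<k. i \<noteq> j \<longrightarrow> h i \<inter> h j = {}"
  proof (intro allI impI)
    fix i j assume "i < k" "j < k" "i \<noteq> j"
    then have "h i \<noteq> h j" using inj unfolding inj_on_def by blast
    then show "h i \<inter> h j = {}" using famDis[OF fa] hF \<open>i < k\<close> \<open>j < k\<close> by blast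
  qed
  have circ: "\<forall>i<k. \<not> affine_dependent (h i) \<and> 0 \<in> rel_interior (convex hull (h i))"
    using fam_circ[OF fa] hF by blast
  have ind: "\<forall>v :: nat \<Rightarrow> 'a. (\<forall>i<k. v i \<in> span (h i)) \<and> (\<Sum>i<k. v i) = 0 \<longrightarrow> (\<forall>i<k. v i = 0)"
  proof (rule allI, rule impI)
    fix v :: "nat \<Rightarrow> 'a" assume a: "(\<forall>i<k. v i \<in> span (h i)) \<and> (\<Sum>i<k. v i) = 0"
    define w where "w C = v (the_inv_into {..<k} h C)" for C
    have wh: "w (h i) = v i" if "i < k" for i unfolding w_def using the_inv_into_f_f[OF inj] that by simp
    have "\<forall>C\<in>F. w C \<in> span C"
    proof
      fix C assume "C \<in> F"
      then obtain i where "i < k" "C = h i" using img by blast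
      then show "w C \<in> span C" using a wh by simp
    qed
    moreover have "(\<Sum>C\<in>F. w C) = 0"
    proof -
      have "(\<Sum>C\<in>F. w C) = (\<Sum>i<k. w (h i))" using sum.reindex_bij_betw[OF h', of w] by simp
      also have "\<dots> = (\<Sum>i<k. v i)" using wh by simp
      finally show ?thesis using a by simp
    qed
    ultimately have "\<forall>C\<in>F. w C = 0" using fam_indep[OF fa, of w] by blast
    then show "\<forall>i<k. v i = 0" using wh hF by metis
  qed
  have "(\<Union>i<k. h i) = \<Union>F" using img by blast
  then have spn: "span (\<Union>i<k. h i) = UNIV" using spF by simp
  show ?thesis using k1 sub dis circ ind spn by (intro exI[of _ k] exI[of _ h]) blast
qed


end
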